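(* The generating series $g(q;x)=\sum_\gamma q^{\omega_H(\gamma)+\omega_{DU}(\gamma)}x^{n(\gamma)}$, where $\gamma$ ranges over all Grand Schröder paths and $n(\gamma)$ is the semi-length, is $$g(q;x)=\frac{1}{\sqrt{1-2(1+2q)x+(1-2q)^2x^2}}.$$
   Context: Steps: $U=(1,1)$, $D=(1,-1)$, $H=(2,0)$. A Grand Schröder path of semi-length $n$ is any lattice path from $(0,0)$ to $(2n,0)$ with steps $U,D,H$. Paths are identified with words of steps; $\omega_H(\gamma)$ is the number of $H$ steps and $\omega_{DU}(\gamma)$ the number of occurrences of the factor $DU$ in $\gamma$. *)

theory Defs
  imports Complex_Main "HOL-Computational_Algebra.Formal_Power_Series"
begin

datatype step = U | D | H

fun step_dx :: "step \<Rightarrow> nat" where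
  "step_dx U = 1" | "step_dx D = 1" | "step_dx H = 2"

fun step_dy :: "step \<Rightarrow> int" where
  "step_dy U = 1" | "step_dy D = -1" | "step_dy H = 0"

definition path_dx :: "step list \<Rightarrow> nat" where
  "path_dx \<gamma> = (\<Sum>s\<leftarrow>\<gamma>. step_dx s)"

definition path_dy :: "step list \<Rightarrow> int" where
  "path_dy \<gamma> = (\<Sum>s\<leftarrow>\<gamma>. step_dy s)"

text \<open>Grand Schroeder path of semi-length n: from (0,0) to (2n,0), no positivity constraint.\<close>
definition grand_schroeder :: "nat \<Rightarrow> step list \<Rightarrow> bool" where
  "grand_schroeder n \<gamma> \<longleftrightarrow> path_dx \<gamma> = 2 * n \<and> path_dy \<gamma> = 0"

definition omega_H :: "step list \<Rightarrow> nat" where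
  "omega_H \<gamma> = count_list \<gamma> H"

definition omega_DU :: "step list \<Rightarrow> nat" where
  "omega_DU \<gamma> = card {i. Suc i < length \<gamma> \<and> \<gamma> ! i = D \<and> \<gamma> ! Suc i = U}"

definition gseries :: "real \<Rightarrow> real fps" where
  "gseries q = Abs_fps (\<lambda>n. \<Sum>\<gamma>\<in>{\<gamma>. grand_schroeder n \<gamma>}. q ^ (omega_H \<gamma> + omega_DU \<gamma>))"

end

theory Submission
  imports Defs "HOL-Computational_Algebra.Polynomial"
begin

lemma alg:
  fixes i d W :: real
  shows "(i+d+2) * ((i+d+2)*(i+d+1)*W)^2 = (2*(i+d)+3) * (((i+d+1)*d*W)^2 + ((i+d+1)*(i+2)*W)^2)
     - (i+d+1) * (((d-1)*d*W)^2 - 2*(d*(i+2)*W)^2 + ((i+1)*(i+2)*W)^2)"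
  by (simp add: algebra_simps power2_eq_square)


lemma binom_id_real:
  fixes m i :: nat
  shows "real (m+2) * real (Suc (Suc m) choose (i+2))^2 =
     real (2*m+3) * (real (Suc m choose (i+2))^2 + real (Suc m choose (i+1))^2)
     - real (m+1) * (real (m choose (i+2))^2 - 2 * real (m choose (i+1))^2 + real (m choose i)^2)"
proof (cases "i \<le> m")
  case False
  then show ?thesis by (simp add: binomial_eq_0)
next
  case True
  then obtain d where md: "m = i + d" using le_Suc_ex by blast
  have absorb: "\<And>n k. Suc k * (n choose Suc k) = (n - k) * (n choose k)"
    using binomial_absorption binomial_absorb_comp by metis
  define X where "X = real (m choose i)"
  define Y1 where "Y1 = real (m choose (i+1))"
  define Y2 where "Y2 = real (m choose (i+2))"
  define Z1 where "Z1 = real (Suc m choose (i+1))"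
  define Z2 where "Z2 = real (Suc m choose (i+2))"
  define V where "V = real (Suc (Suc m) choose (i+2))"
  have r1: "Y1 = real d * X / (real i + 1)"
  proof -
    have "Suc i * (m choose Suc i) = (m - i) * (m choose i)" by (rule absorb)
    from arg_cong[where f=real, OF this] have "(real i + 1) * Y1 = real d * X" unfolding Y1_def X_def md
      by (simp add: algebra_simps)
    then show ?thesis by (simp add: field_simps)
  qed
  have r2: "Y2 = (real d - 1) * Y1 / (real i + 2)"
  proof (cases d)
    case 0
    then have "Y1 = 0" "Y2 = 0" unfolding Y1_def Y2_def md by (simp_all add: binomial_eq_0)
    then show ?thesis by simp
  next
    case (Suc d')
    have "Suc (Suc i) * (m choose Suc (Suc i)) = (m - Suc i) * (m choose Suc i)" by (rule absorb)
    from arg_cong[where f=real, OF this] have "(real i + 2) * Y2 = real d' * Y1" unfolding Y1_def Y2_def md Suc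
      by (simp add: algebra_simps)
    then show ?thesis using Suc by (simp add: field_simps)
  qed
  have r3: "Z1 = (real m + 1) * X / (real i + 1)"
  proof -
    have "Suc i * (Suc m choose Suc i) = Suc m * (m choose i)" by (rule Suc_times_binomial)
    from arg_cong[where f=real, OF this] have "(real i + 1) * Z1 = (real m + 1) * X" unfolding Z1_def X_def
      by (simp add: algebra_simps)
    then show ?thesis by (simp add: field_simps)
  qed
  have r4: "Z2 = (real m + 1) * Y1 / (real i + 2)"
  proof -
    have "Suc (Suc i) * (Suc m choose Suc (Suc i)) = Suc m * (m choose Suc i)" by (rule Suc_times_binomial)
    from arg_cong[where f=real, OF this] have "(real i + 2) * Z2 = (real m + 1) * Y1" unfolding Z2_def Y1_def
      by (simp add: algebra_simps)
    then show ?thesis by (simp add: field_simps)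
  qed
  have r5: "V = (real m + 2) * Z1 / (real i + 2)"
  proof -
    have "Suc (Suc i) * (Suc (Suc m) choose Suc (Suc i)) = Suc (Suc m) * (Suc m choose Suc i)" by (rule Suc_times_binomial)
    from arg_cong[where f=real, OF this] have "(real i + 2) * V = (real m + 2) * Z1" unfolding V_def Z1_def
      by (simp add: algebra_simps)
    then show ?thesis by (simp add: field_simps)
  qed
  have m: "real m = real i + real d" using md by simp
  define W where "W = X / ((real i + 1) * (real i + 2))"
  have a: "real i + 1 \<noteq> 0" "real i + 2 \<noteq> 0" by linarith+
  have a3: "(real i + 1) * (real i + 2) \<noteq> 0" using a by simp
  have eX: "X = (real i + 1) * (real i + 2) * W" using a a3 unfolding W_def by (simp add: field_simps)
  have eY1: "Y1 = real d * (real i + 2) * W" using a a3 unfolding r1 W_def by (simp add: field_simps)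
  have eY2: "Y2 = (real d - 1) * real d * W" using a a3 unfolding r2 eY1 by (simp add: field_simps)
  have eZ1: "Z1 = (real i + real d + 1) * (real i + 2) * W" using a a3 unfolding r3 W_def m by (simp add: field_simps)
  have eZ2: "Z2 = (real i + real d + 1) * real d * W" using a a3 unfolding r4 eY1 m by (simp add: field_simps)
  have eV: "V = (real i + real d + 2) * (real i + real d + 1) * W" using a a3 unfolding r5 eZ1 m by (simp add: field_simps)
  have "real (m+2) * V^2 = real (2*m+3) * (Z2^2 + Z1^2) - real (m+1) * (Y2^2 - 2*Y1^2 + X^2)"
    unfolding eV eZ1 eZ2 eY1 eY2 eX using alg[of "real i" "real d" W] by (simp add: md algebra_simps)
  then show ?thesis unfolding V_def Z1_def Z2_def Y1_def Y2_def X_def by simp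
qed


definition Tp :: "nat \<Rightarrow> nat \<Rightarrow> real poly" where
  "Tp a b = (\<Sum>k\<le>a. monom (real (a choose k) * real (b choose k)) k)"

lemma coeff_Tp: "coeff (Tp a b) k = real (a choose k) * real (b choose k)"
  unfolding Tp_def coeff_sum coeff_monom
  by (cases "k \<le> a") (auto simp: binomial_eq_0)

lemma Tp_rec: "Tp (Suc a) (Suc b) = Tp a (Suc b) + Tp (Suc a) b + pCons 0 (Tp a b) - Tp a b"
proof (rule poly_eqI)
  fix k show "coeff (Tp (Suc a) (Suc b)) k = coeff (Tp a (Suc b) + Tp (Suc a) b + pCons 0 (Tp a b) - Tp a b) k"
    by (cases k) (simp_all add: coeff_Tp algebra_simps)
qed

lemma Tp_0_right: "Tp a 0 = 1"
  by (rule poly_eqI) (simp add: coeff_Tp coeff_1)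

lemma Tp_0_left: "Tp 0 b = 1"
  by (rule poly_eqI) (simp add: coeff_Tp coeff_1)

lemma Tp_diag_rec:
  "smult (real m + 2) (Tp (m+2) (m+2)) =
     smult (2 * real m + 3) (Tp (m+1) (m+1) + pCons 0 (Tp (m+1) (m+1)))
     - smult (real m + 1) (Tp m m - smult 2 (pCons 0 (Tp m m)) + pCons 0 (pCons 0 (Tp m m)))"
proof (rule poly_eqI)
  fix k
  show "coeff (smult (real m + 2) (Tp (m+2) (m+2))) k = coeff (smult (2 * real m + 3) (Tp (m+1) (m+1) + pCons 0 (Tp (m+1) (m+1)))
     - smult (real m + 1) (Tp m m - smult 2 (pCons 0 (Tp m m)) + pCons 0 (pCons 0 (Tp m m)))) k"
  proof (cases k)
    case 0 then show ?thesis by (simp add: coeff_Tp algebra_simps)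
  next
    case (Suc j)
    show ?thesis
    proof (cases j)
      case 0
      then show ?thesis using Suc by (simp add: coeff_Tp algebra_simps power2_eq_square)
    next
      case (Suc i)
      have "real (m+2) * real (Suc (Suc m) choose (i+2))^2 =
     real (2*m+3) * (real (Suc m choose (i+2))^2 + real (Suc m choose (i+1))^2)
     - real (m+1) * (real (m choose (i+2))^2 - 2 * real (m choose (i+1))^2 + real (m choose i)^2)"
        by (rule binom_id_real)
      then show ?thesis using Suc \<open>k = Suc j\<close> by (simp add: coeff_Tp power2_eq_square algebra_simps)
    qed
  qed
qed


definition W :: "nat \<Rightarrow> nat \<Rightarrow> step list set" where
  "W a b = {w. count_list w U + count_list w H = a \<and> count_list w D + count_list w H = b}"

definition wt :: "real \<Rightarrow> step list \<Rightarrow> real" where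
  "wt q w = q ^ (omega_H w + omega_DU w)"

definition S :: "real \<Rightarrow> nat \<Rightarrow> nat \<Rightarrow> real" where
  "S q a b = (\<Sum>w\<in>W a b. wt q w)"

lemma length_count: "length w = count_list w U + count_list w D + count_list w H"
proof (induction w)
  case (Cons x w) then show ?case by (cases x) auto
qed simp

lemma finite_W: "finite (W a b)"
proof -
  have "W a b \<subseteq> {xs. set xs \<subseteq> {U,D,H} \<and> length xs \<le> a + b}"
  proof
    fix w assume "w \<in> W a b"
    then have "length w \<le> a + b" unfolding W_def using length_count[of w] by auto
    moreover have "set w \<subseteq> {U,D,H}" by (auto intro: step.exhaust)
    ultimately show "w \<in> {xs. set xs \<subseteq> {U,D,H} \<and> length xs \<le> a + b}" by simp
  qed
  moreover have "finite {xs. set xs \<subseteq> {U,D,H} \<and> length xs \<le> a + b}"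
    by (rule finite_lists_length_le) simp
  ultimately show ?thesis by (rule finite_subset)
qed

lemma omega_H_Cons: "omega_H (x # w) = omega_H w + (if x = H then 1 else 0)"
  unfolding omega_H_def by simp

lemma omega_DU_Cons:
  "omega_DU (x # w) = omega_DU w + (if x = D \<and> w \<noteq> [] \<and> hd w = U then 1 else 0)"
proof -
  let ?A = "{i. Suc i < length w \<and> w ! i = D \<and> w ! Suc i = U}"
  let ?B = "{i. Suc i < length (x#w) \<and> (x#w) ! i = D \<and> (x#w) ! Suc i = U}"
  let ?Z = "if x = D \<and> w \<noteq> [] \<and> hd w = U then {0::nat} else {}"
  have eq: "?B = ?Z \<union> Suc ` ?A"
  proof (rule set_eqI)
    fix i show "i \<in> ?B \<longleftrightarrow> i \<in> ?Z \<union> Suc ` ?A"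
    proof (cases i)
      case 0 then show ?thesis by (cases w) auto
    next
      case (Suc j) then show ?thesis by auto
    qed
  qed
  have fin: "finite ?A" by (rule finite_subset[of _ "{..<length w}"]) auto
  have "card ?B = card ?Z + card (Suc ` ?A)"
    unfolding eq by (rule card_Un_disjoint) (use fin in auto)
  also have "card (Suc ` ?A) = card ?A" by (rule card_image) simp
  finally show ?thesis unfolding omega_DU_def by simp
qed

lemma wt_U: "wt q (U # w) = wt q w"
  unfolding wt_def by (simp add: omega_H_Cons omega_DU_Cons)
lemma wt_H: "wt q (H # w) = q * wt q w"
  unfolding wt_def by (simp add: omega_H_Cons omega_DU_Cons)
lemma wt_D: "wt q (D # w) = (if w \<noteq> [] \<and> hd w = U then q else 1) * wt q w"
  unfolding wt_def by (simp add: omega_H_Cons omega_DU_Cons)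

lemma Cons_W: "x # w \<in> W a b \<longleftrightarrow>
   (case x of U \<Rightarrow> 0 < a \<and> w \<in> W (a - 1) b | D \<Rightarrow> 0 < b \<and> w \<in> W a (b - 1)
     | H \<Rightarrow> 0 < a \<and> 0 < b \<and> w \<in> W (a - 1) (b - 1))"
  unfolding W_def by (cases x) auto

lemma Nil_W: "[] \<in> W a b \<longleftrightarrow> a = 0 \<and> b = 0"
  unfolding W_def by auto

lemma W_SS: "W (Suc a) (Suc b) = Cons U ` W a (Suc b) \<union> Cons D ` W (Suc a) b \<union> Cons H ` W a b"
proof (rule set_eqI)
  fix w show "w \<in> W (Suc a) (Suc b) \<longleftrightarrow> w \<in> Cons U ` W a (Suc b) \<union> Cons D ` W (Suc a) b \<union> Cons H ` W a b"
  proof (cases w)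
    case Nil then show ?thesis by (auto simp: Nil_W)
  next
    case (Cons x v) then show ?thesis by (cases x) (auto simp: Cons_W)
  qed
qed

lemma W_S0: "W (Suc a) 0 = Cons U ` W a 0"
proof (rule set_eqI)
  fix w show "w \<in> W (Suc a) 0 \<longleftrightarrow> w \<in> Cons U ` W a 0"
  proof (cases w)
    case Nil then show ?thesis by (auto simp: Nil_W)
  next
    case (Cons x v) then show ?thesis by (cases x) (auto simp: Cons_W)
  qed
qed

lemma W_0S: "W 0 (Suc b) = Cons D ` W 0 b"
proof (rule set_eqI)
  fix w show "w \<in> W 0 (Suc b) \<longleftrightarrow> w \<in> Cons D ` W 0 b"
  proof (cases w)
    case Nil then show ?thesis by (auto simp: Nil_W)
  next
    case (Cons x v) then show ?thesis by (cases x) (auto simp: Cons_W)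
  qed
qed

lemma W_00: "W 0 0 = {[]}"
proof (rule set_eqI)
  fix w show "w \<in> W 0 0 \<longleftrightarrow> w \<in> {[]}"
  proof (cases w)
    case Nil then show ?thesis by (auto simp: Nil_W)
  next
    case (Cons x v) then show ?thesis by (cases x) (auto simp: Cons_W)
  qed
qed

lemma sum_Cons_image: "(\<Sum>w\<in>Cons x ` A. f w) = (\<Sum>w\<in>A. f (x # w))"
  by (subst sum.reindex) (auto simp: inj_on_def)

lemma S_00: "S q 0 0 = 1"
  unfolding S_def W_00 by (simp add: wt_def omega_H_def omega_DU_def)

lemma S_S0: "S q (Suc a) 0 = S q a 0"
  unfolding S_def W_S0 sum_Cons_image wt_U ..

lemma S_0S: "S q 0 (Suc b) = S q 0 b"
proof -
  have "\<And>w. w \<in> W 0 b \<Longrightarrow> wt q (D # w) = wt q w"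
  proof -
    fix w assume w: "w \<in> W 0 b"
    have "\<not> (w \<noteq> [] \<and> hd w = U)"
    proof
      assume "w \<noteq> [] \<and> hd w = U"
      then obtain v where "w = U # v" by (cases w) auto
      with w show False by (simp add: W_def)
    qed
    then show "wt q (D # w) = wt q w" unfolding wt_D by (subst if_not_P) auto
  qed
  then show ?thesis unfolding S_def W_0S sum_Cons_image by (rule sum.cong[OF refl])
qed

lemma S_SS: "S q (Suc a) (Suc b) = S q a (Suc b) + S q (Suc a) b + (2*q - 1) * S q a b"
proof -
  have d1: "Cons U ` W a (Suc b) \<inter> Cons D ` W (Suc a) b = {}" by auto
  have d2: "(Cons U ` W a (Suc b) \<union> Cons D ` W (Suc a) b) \<inter> Cons H ` W a b = {}" by auto
  have fin: "finite (Cons x ` W c e)" for x c e using finite_W by simp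
  have "S q (Suc a) (Suc b) = (\<Sum>w\<in>Cons U ` W a (Suc b). wt q w) + (\<Sum>w\<in>Cons D ` W (Suc a) b. wt q w)
       + (\<Sum>w\<in>Cons H ` W a b. wt q w)"
    unfolding S_def W_SS
    by (simp add: sum.union_disjoint[OF _ _ d2] sum.union_disjoint[OF _ _ d1] fin)
  also have "(\<Sum>w\<in>Cons U ` W a (Suc b). wt q w) = S q a (Suc b)"
    unfolding S_def sum_Cons_image wt_U ..
  also have "(\<Sum>w\<in>Cons H ` W a b. wt q w) = q * S q a b"
    unfolding S_def sum_Cons_image wt_H by (simp add: sum_distrib_left)
  also have "(\<Sum>w\<in>Cons D ` W (Suc a) b. wt q w) = S q (Suc a) b + (q - 1) * S q a b"
  proof -
    have "(\<Sum>w\<in>Cons D ` W (Suc a) b. wt q w) =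
       (\<Sum>w\<in>W (Suc a) b. wt q w + (if w \<noteq> [] \<and> hd w = U then (q - 1) * wt q w else 0))"
      unfolding sum_Cons_image
    proof (intro sum.cong refl)
      fix w :: "step list"
      show "wt q (D # w) = wt q w + (if w \<noteq> [] \<and> hd w = U then (q - 1) * wt q w else 0)"
        by (cases w) (auto simp: wt_D algebra_simps)
    qed
    also have "\<dots> = S q (Suc a) b + (\<Sum>w\<in>W (Suc a) b. if w \<noteq> [] \<and> hd w = U then (q - 1) * wt q w else 0)"
      unfolding S_def by (simp add: sum.distrib)
    also have "(\<Sum>w\<in>W (Suc a) b. if w \<noteq> [] \<and> hd w = U then (q - 1) * wt q w else 0)
         = (\<Sum>w\<in>{w\<in>W (Suc a) b. w \<noteq> [] \<and> hd w = U}. (q - 1) * wt q w)"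
      by (rule sum.inter_filter[symmetric]) (rule finite_W)
    also have "{w\<in>W (Suc a) b. w \<noteq> [] \<and> hd w = U} = Cons U ` W a b"
    proof (rule set_eqI)
      fix w show "w \<in> {w\<in>W (Suc a) b. w \<noteq> [] \<and> hd w = U} \<longleftrightarrow> w \<in> Cons U ` W a b"
        by (cases w) (auto simp: Cons_W)
    qed
    also have "(\<Sum>w\<in>Cons U ` W a b. (q - 1) * wt q w) = (q - 1) * S q a b"
      unfolding S_def sum_Cons_image wt_U by (simp add: sum_distrib_left)
    finally show ?thesis .
  qed
  finally show ?thesis by (simp add: algebra_simps)
qed

lemma S_closed: "S q a b = poly (Tp a b) (2*q)"
proof (induction a arbitrary: b)
  case 0
  show ?case
  proof (induction b)
    case 0 then show ?case by (simp add: S_00 Tp_0_left)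
  next
    case (Suc b) then show ?case by (simp add: S_0S Tp_0_left)
  qed
next
  case (Suc a)
  note IH = Suc.IH
  show ?case
  proof (induction b)
    case 0 then show ?case using IH[of 0] by (simp add: S_S0 Tp_0_right)
  next
    case (Suc b)
    then show ?case using IH[of b] IH[of "Suc b"]
      by (simp add: S_SS Tp_rec algebra_simps)
  qed
qed

unbundle fps_syntax

lemma path_dx_count: "path_dx w = count_list w U + count_list w D + 2 * count_list w H"
  unfolding path_dx_def
proof (induction w)
  case (Cons x w) then show ?case by (cases x) auto
qed simp

lemma path_dy_count: "path_dy w = int (count_list w U) - int (count_list w D)"
  unfolding path_dy_def
proof (induction w)
  case (Cons x w) then show ?case by (cases x) auto
qed simp

lemma gs_W: "{\<gamma>. grand_schroeder n \<gamma>} = W n n"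
  unfolding grand_schroeder_def W_def path_dx_count path_dy_count by auto

lemma gseries_nth: "gseries q $ n = poly (Tp n n) (2*q)"
  unfolding gseries_def gs_W by (simp add: S_closed[symmetric] S_def wt_def)

lemma poly_rec:
  fixes q :: real
  shows "(real m + 2) * poly (Tp (m+2) (m+2)) (2*q) =
     (1 + 2*q) * (2 * real m + 3) * poly (Tp (m+1) (m+1)) (2*q)
     - (1 - 2*q)^2 * (real m + 1) * poly (Tp m m) (2*q)"
proof -
  have "poly (smult (real m + 2) (Tp (m+2) (m+2))) (2*q) = poly (smult (2 * real m + 3) (Tp (m+1) (m+1) + pCons 0 (Tp (m+1) (m+1)))
     - smult (real m + 1) (Tp m m - smult 2 (pCons 0 (Tp m m)) + pCons 0 (pCons 0 (Tp m m)))) (2*q)"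
    by (subst Tp_diag_rec) (rule refl)
  then show ?thesis by (simp add: algebra_simps power2_eq_square)
qed

lemma gseries_0: "gseries q $ 0 = 1"
  by (simp add: gseries_nth Tp_0_right)

lemma gseries_1: "gseries q $ 1 = 1 + 2 * q"
proof -
  have "Tp 1 1 = 1 + pCons 0 1"
    by (rule poly_eqI) (simp add: coeff_Tp coeff_1 coeff_pCons split: nat.splits)
  then show ?thesis by (simp add: gseries_nth)
qed

theorem mainTheorem14:
  fixes q :: real
  shows "gseries q = inverse (fps_radical (\<lambda>k a. root k a) 2
           (1 - fps_const (2 * (1 + 2 * q)) * fps_X + fps_const ((1 - 2 * q)^2) * fps_X ^ 2))"
proof -
  define c where "c = 1 + 2 * q"
  define e where "e = (1 - 2 * q)^2"
  define P where "P = 1 - fps_const (2 * c) * fps_X + fps_const e * (fps_X ^ 2 :: real fps)"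
  define R where "R = fps_radical (\<lambda>k a. root k a) 2 P"
  define G where "G = inverse R"
  have P0: "P $ 0 = 1" unfolding P_def by simp
  have R0: "R $ 0 = 1" unfolding R_def using P0 by simp
  have RR: "R * R = P"
  proof -
    have "(fps_radical (\<lambda>k a. root k a) (Suc 1) P) ^ (Suc 1) = P"
      using power_radical[of P "\<lambda>k a. root k a" 1] P0 by simp
    then show ?thesis unfolding R_def by (simp add: power2_eq_square numeral_2_eq_2)
  qed
  have GR: "G * R = 1" unfolding G_def using R0 by (simp add: inverse_mult_eq_1)
  have G0: "G $ 0 = 1" unfolding G_def using R0 by simp
  have dGR: "fps_deriv G * R + G * fps_deriv R = 0"
    using arg_cong[OF GR, of fps_deriv] by (simp add: algebra_simps)
  have diff: "fps_const 2 * P * fps_deriv G + fps_deriv P * G = 0"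
  proof -
    have "fps_const 2 * P * fps_deriv G + fps_deriv P * G
        = fps_const 2 * R * (fps_deriv G * R + G * fps_deriv R)"
      unfolding RR[symmetric] by (simp add: algebra_simps mult_2 fps_numeral_fps_const[symmetric])
    then show ?thesis using dGR by simp
  qed
  have Pn: "P $ k = (if k = 0 then 1 else 0) - (if k = 1 then 2 * c else 0) + (if k = 2 then e else 0)" for k
    unfolding P_def by simp
  have dP: "fps_deriv P = fps_const (- 2 * c) + fps_const (2 * e) * fps_X"
  proof (rule fps_ext)
    fix n show "fps_deriv P $ n = (fps_const (- 2 * c) + fps_const (2 * e) * fps_X) $ n"
      by (cases n) (auto simp: Pn)
  qed
  have PF: "(P * F) $ n = F $ n - 2*c*(if n = 0 then 0 else F$(n-1)) + e * (if n < 2 then 0 else F $ (n-2))" for F n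
  proof -
    have "P * F = F - fps_const (2 * c) * (fps_X * F) + fps_const e * (fps_X ^ 2 * F)"
      unfolding P_def by (simp only: ring_distribs mult.assoc mult_1)
    then show ?thesis by (simp add: fps_X_power_mult_nth)
  qed
  have DF: "(fps_deriv P * F) $ n = - 2 * c * F $ n + 2 * e * (if n = 0 then 0 else F$(n-1))" for F n
  proof -
    have "fps_deriv P * F = fps_const (- 2 * c) * F + fps_const (2 * e) * (fps_X * F)"
      unfolding dP by (simp only: ring_distribs mult.assoc)
    then show ?thesis by simp
  qed
  let ?E = "fps_const 2 * P * fps_deriv G + fps_deriv P * G"
  have Ee: "?E $ n = 2 * (P * fps_deriv G) $ n + (fps_deriv P * G) $ n" for n
    by (simp only: fps_add_nth mult.assoc fps_mult_left_const_nth)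
  have c0: "?E $ 0 = 2 * G $ 1 - 2 * c * G $ 0"
    unfolding Ee PF DF by simp
  have cS: "?E $ Suc m = 2 * ((real m + 2) * G $ (m+2) - 2 * c * (real m + 1) * G $ (m+1) + e * real m * G $ m)
            - 2 * c * G $ (m+1) + 2 * e * G $ m" for m
    unfolding Ee PF DF by (cases m) (simp_all add: algebra_simps)
  have Ez: "?E $ n = 0" for n by (simp only: diff fps_zero_nth)
  have G1: "G $ 1 = c" using c0[unfolded Ez] G0 by simp
  have Grec: "(real m + 2) * G $ (m+2) = c * (2 * real m + 3) * G $ (m+1) - e * (real m + 1) * G $ m" for m
  proof -
    have h: "0 = 2 * ((real m + 2) * G $ (m+2) - 2 * c * (real m + 1) * G $ (m+1) + e * real m * G $ m)
            - 2 * c * G $ (m+1) + 2 * e * G $ m" using cS[of m, unfolded Ez] .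
    show ?thesis using h by (simp add: algebra_simps)
  qed
  have "G $ n = gseries q $ n" for n
  proof (induction n rule: less_induct)
    case (less n)
    show ?case
    proof (cases n)
      case 0 then show ?thesis using G0 gseries_0 by simp
    next
      case (Suc k)
      show ?thesis
      proof (cases k)
        case 0 then show ?thesis using Suc G1 gseries_1 c_def by simp
      next
        case (Suc m)
        have n: "n = m + 2" using Suc \<open>n = Suc k\<close> by simp
        have i1: "G $ (m+1) = gseries q $ (m+1)" using less n by simp
        have i0: "G $ m = gseries q $ m" using less n by simp
        have "(real m + 2) * G $ (m+2) = (real m + 2) * gseries q $ (m+2)"
          unfolding Grec i1 i0 gseries_nth poly_rec c_def e_def by simp
        then show ?thesis unfolding n by simp
      qed
    qed
  qed
  then have "G = gseries q" by (rule fps_ext)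
  then show ?thesis unfolding G_def R_def P_def c_def e_def by simp
qed

end
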